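(* Let $\{m_k:k\ge0\}$ be positive reals with $\sum_k m_k=\infty$ and $m_k\to0$; let $S_0=0$ and $S_{k+1}=\sum_{i=0}^k m_i$. Define functions $f_j:(S_j,S_{j+1}]\to\mathbb{R}$, $j\ge0$, recursively with constants $c_0=0$ and $c_j=f_{j-1}(S_j)$ for $j\ge1$, by $$f_j(x)=\begin{cases}-x+S_j+c_j & x\in(S_j,S_j+\tfrac{m_j}{16})\\ \tfrac{8}{m_j}(x-S_j-\tfrac{m_j}{8})^2-\tfrac{3m_j}{32}+c_j & x\in[S_j+\tfrac{m_j}{16},S_j+\tfrac{3m_j}{16})\\ -\tfrac{5m_j}{16}\exp\!\big(\tfrac{5m_j/16}{x-S_j-m_j/2}+1\big)+\tfrac{m_j}{4}+c_j & x\in[S_j+\tfrac{3m_j}{16},S_j+\tfrac{m_j}{2})\\ \tfrac{m_j}{4}+c_j & x=S_j+\tfrac{m_j}{2}\\ \tfrac{5m_j}{16}\exp\!\big(\tfrac{-5m_j/16}{x-S_j-m_j/2}+1\big)+\tfrac{m_j}{4}+c_j & x\in(S_j+\tfrac{m_j}{2},S_j+\tfrac{13m_j}{16})\\ -\tfrac{8}{m_j}(x-S_j-\tfrac{7m_j}{8})^2+\tfrac{19m_j}{32}+c_j & x\in[S_j+\tfrac{13m_j}{16},S_j+\tfrac{15m_j}{16})\\ -x+S_j+\tfrac{3m_j}{2}+c_j & x\in[S_j+\tfrac{15m_j}{16},S_{j+1}].\end{cases}$$ Then for each $j\ge0$, the continuous extension of $f_j$ to $[S_j,S_{j+1}]$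 (defined at $S_j$ by $\lim_{x\downarrow S_j}f_j(x)$) is continuous on $[S_j,S_{j+1}]$, is bounded from below by $c_j-3m_j/32$ (so by $-3m_0/32$ when $j=0$), is differentiable on $[S_j,S_{j+1}]$ (with one-sided derivatives at the endpoints) with $\dot f_j(S_j)=\dot f_j(S_{j+1})=-1$, and its derivative is locally Lipschitz continuous.
   Context: $\dot f_j$ denotes the derivative of $f_j$, understood as a one-sided derivative at the endpoints of $[S_j,S_{j+1}]$. *)

theory Defs
  imports "HOL-Analysis.Analysis"
begin

definition Sseq :: "(nat \<Rightarrow> real) \<Rightarrow> nat \<Rightarrow> real" where
  "Sseq m j = (\<Sum>i<j. m i)"

definition fpiece :: "real \<Rightarrow> real \<Rightarrow> real \<Rightarrow> real \<Rightarrow> real" where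
  "fpiece mj s c x =
    (if x < s + mj/16 then - x + s + c
     else if x < s + 3*mj/16 then 8/mj * (x - s - mj/8)^2 - 3*mj/32 + c
     else if x < s + mj/2 then - (5*mj/16) * exp ((5*mj/16) / (x - s - mj/2) + 1) + mj/4 + c
     else if x = s + mj/2 then mj/4 + c
     else if x < s + 13*mj/16 then (5*mj/16) * exp ((- (5*mj/16)) / (x - s - mj/2) + 1) + mj/4 + c
     else if x < s + 15*mj/16 then - 8/mj * (x - s - 7*mj/8)^2 + 19*mj/32 + c
     else - x + s + 3*mj/2 + c)"

fun cseq :: "(nat \<Rightarrow> real) \<Rightarrow> nat \<Rightarrow> real" where
  "cseq m 0 = 0"
| "cseq m (Suc j) = fpiece (m j) (Sseq m j) (cseq m j) (Sseq m (Suc j))"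

text \<open>f_j on (S_j, S_(j+1)] (the formula; only its values on that interval matter).\<close>
definition fj :: "(nat \<Rightarrow> real) \<Rightarrow> nat \<Rightarrow> real \<Rightarrow> real" where
  "fj m j x = fpiece (m j) (Sseq m j) (cseq m j) x"

definition fext :: "(nat \<Rightarrow> real) \<Rightarrow> nat \<Rightarrow> real \<Rightarrow> real" where
  "fext m j x = (if x = Sseq m j then Lim (at_right (Sseq m j)) (fj m j) else fj m j x)"

end

theory Submission
  imports Defs "HOL-Real_Asymp.Real_Asymp"
begin

definition Dg :: "real \<Rightarrow> real" where
  "Dg t = (if t < 1/16 then -1 else if t < 3/16 then 16*t - 2
     else if t < 1/2 then (5/16)^2/(t-1/2)^2 * exp ((5/16)/(t-1/2)+1)
     else if t = 1/2 then 0
     else if t < 13/16 then (5/16)^2/(t-1/2)^2 * exp (-(5/16)/(t-1/2)+1)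
     else if t < 15/16 then 14 - 16*t else -1)"

lemma gval: "fpiece 1 0 0 x = (if x < 1/16 then -x else if x < 3/16 then 8*(x-1/8)^2 - 3/32
     else if x < 1/2 then -(5/16)*exp((5/16)/(x-1/2)+1) + 1/4 else if x = 1/2 then 1/4
     else if x < 13/16 then (5/16)*exp(-(5/16)/(x-1/2)+1)+1/4
     else if x < 15/16 then -8*(x-7/8)^2 + 19/32 else -x + 3/2)"
  unfolding fpiece_def by simp

lemma piece_deriv:
  fixes f h :: "real \<Rightarrow> real"
  assumes "a \<le> x" "x \<le> b" "(h has_real_derivative D) (at x)" "\<And>y. y \<in> {a..b} \<Longrightarrow> f y = h y"
  shows "(f has_real_derivative D) (at x within {a..b})"
  by (rule has_field_derivative_transform_within[where d=1 and f=h])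
     (use assms in \<open>auto intro: has_field_derivative_at_within\<close>)

lemma piece_deriv_lt:
  fixes f h :: "real \<Rightarrow> real"
  assumes "a \<le> x" "x \<le> b" "x < c" "(h has_real_derivative D) (at x)"
    "\<And>y. y \<in> {a..b} \<Longrightarrow> y < c \<Longrightarrow> f y = h y"
  shows "(f has_real_derivative D) (at x within {a..b})"
  by (rule has_field_derivative_transform_within[where d="c - x" and f=h])
     (use assms in \<open>auto intro: has_field_derivative_at_within simp: dist_real_def\<close>)

lemma piece_deriv_gt:
  fixes f h :: "real \<Rightarrow> real"
  assumes "a \<le> x" "x \<le> b" "x > c" "(h has_real_derivative D) (at x)"
    "\<And>y. y \<in> {a..b} \<Longrightarrow> y > c \<Longrightarrow> f y = h y"
  shows "(f has_real_derivative D) (at x within {a..b})"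
  by (rule has_field_derivative_transform_within[where d="x - c" and f=h])
     (use assms in \<open>auto intro: has_field_derivative_at_within simp: dist_real_def\<close>)

lemma deriv_out:
  fixes f :: "real \<Rightarrow> real"
  assumes "x \<notin> {a..b}"
  shows "(f has_real_derivative D) (at x within {a..b})"
proof -
  have "\<not> x islimpt {a..b}" using assms closed_limpt closed_atLeastAtMost by blast
  then have "at x within {a..b} = bot" using trivial_limit_within by blast
  then show ?thesis by simp
qed

lemma piece_ok:
  fixes f :: "real \<Rightarrow> real"
  assumes "\<And>y. y \<in> {a..b} \<Longrightarrow> (f has_real_derivative D y) (at y within {a..b})"
  shows "(f has_real_derivative D x) (at x within {a..b})"
  using assms deriv_out by (cases "x \<in> {a..b}") auto

lemma deriv_union:
  "(f has_field_derivative D) (at x within S) \<Longrightarrow> (f has_field_derivative D) (at x within T)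
   \<Longrightarrow> (f has_field_derivative D) (at x within S \<union> T)"
  unfolding has_field_derivative_iff by (rule Lim_Un)

lemma deriv_pieces:
  fixes f :: "real \<Rightarrow> real"
  assumes "\<And>y. y \<in> {0..1/16} \<Longrightarrow> (f has_real_derivative D y) (at y within {0..1/16})"
    "\<And>y. y \<in> {1/16..3/16} \<Longrightarrow> (f has_real_derivative D y) (at y within {1/16..3/16})"
    "\<And>y. y \<in> {3/16..1/2} \<Longrightarrow> (f has_real_derivative D y) (at y within {3/16..1/2})"
    "\<And>y. y \<in> {1/2..13/16} \<Longrightarrow> (f has_real_derivative D y) (at y within {1/2..13/16})"
    "\<And>y. y \<in> {13/16..15/16} \<Longrightarrow> (f has_real_derivative D y) (at y within {13/16..15/16})"
    "\<And>y. y \<in> {15/16..1} \<Longrightarrow> (f has_real_derivative D y) (at y within {15/16..1})"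
  shows "(f has_real_derivative D x) (at x within {0..1})"
proof -
  have eq: "{0..1::real} = {0..1/16} \<union> {1/16..3/16} \<union> {3/16..1/2} \<union> {1/2..13/16} \<union> {13/16..15/16} \<union> {15/16..1}"
    by auto
  show ?thesis unfolding eq
    by (intro deriv_union piece_ok[OF assms(1)] piece_ok[OF assms(2)] piece_ok[OF assms(3)]
        piece_ok[OF assms(4)] piece_ok[OF assms(5)] piece_ok[OF assms(6)])
qed

lemma lip_piece:
  fixes f :: "real \<Rightarrow> real"
  assumes "a \<le> b" "\<And>x. x \<in> {a..b} \<Longrightarrow> (f has_real_derivative f' x) (at x within {a..b})"
    "\<And>x. x \<in> {a..b} \<Longrightarrow> \<bar>f' x\<bar> \<le> B"
  shows "B-lipschitz_on {a..b} f"
proof (rule lipschitz_onI)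
  show "0 \<le> B" using assms(1) assms(3)[of a] by auto
  fix x y assume "x \<in> {a..b}" "y \<in> {a..b}"
  then show "dist (f x) (f y) \<le> B * dist x y"
    using field_differentiable_bound[of "{a..b}" f f' B x y] assms
    by (auto simp: dist_real_def)
qed

lemma lip_cat:
  fixes f :: "real \<Rightarrow> real"
  assumes "L-lipschitz_on {a..b} f" "L-lipschitz_on {b..c} f"
  shows "L-lipschitz_on {a..c} f"
  using lipschitz_on_concat[OF assms] by simp

lemma bnd_cont:
  fixes f :: "real \<Rightarrow> real"
  assumes "continuous_on {a..b} f"
  obtains B where "B \<ge> 0" "\<And>x. x \<in> {a..b} \<Longrightarrow> \<bar>f x\<bar> \<le> B"
proof -
  have "bounded (f ` {a..b})" by (intro compact_imp_bounded compact_continuous_image assms compact_Icc)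
  then obtain B where B: "\<forall>y\<in>f ` {a..b}. norm y \<le> B" by (auto simp: bounded_iff)
  have "\<bar>f x\<bar> \<le> \<bar>B\<bar>" if "x \<in> {a..b}" for x
  proof -
    from B that have "norm (f x) \<le> B" by blast
    then show ?thesis by simp
  qed
  then show ?thesis using that[of "\<bar>B\<bar>"] by simp
qed


definition "d3 y = (5/16)^2/(y-1/2)^2 * exp ((5/16)/(y-1/2)+1::real)"
definition "d4 y = (5/16)^2/(y-1/2)^2 * exp (-(5/16)/(y-1/2)+1::real)"
definition "dd3 y = exp ((5/16)/(y-1/2)+1) * (-2*(5/16)^2/(y-1/2)^3 - (5/16)^3/(y-1/2)^4::real)"
definition "dd4 y = exp (-(5/16)/(y-1/2)+1) * (-2*(5/16)^2/(y-1/2)^3 + (5/16)^3/(y-1/2)^4::real)"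

lemma gP1: "z \<in> {0..1/16} \<Longrightarrow> fpiece 1 0 0 z = -z"
proof (cases "z < 1/16")
  case False assume "z \<in> {0..1/16}" then have zv: "z = 1/16" using False by simp
  show ?thesis unfolding zv by (simp add: gval power2_eq_square)
qed (auto simp: gval)

lemma gP2: "z \<in> {1/16..3/16} \<Longrightarrow> fpiece 1 0 0 z = 8*(z-1/8)^2 - 3/32"
proof (cases "z < 3/16")
  case False assume "z \<in> {1/16..3/16}" then have zv: "z = 3/16" using False by simp
  show ?thesis unfolding zv by (simp add: gval power2_eq_square)
qed (auto simp: gval)

lemma gP3: "z \<in> {3/16..1/2} \<Longrightarrow> z < 1/2 \<Longrightarrow> fpiece 1 0 0 z = -(5/16)*exp((5/16)/(z-1/2)+1) + 1/4"
  by (auto simp: gval)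

lemma gP4: "z \<in> {1/2..13/16} \<Longrightarrow> z > 1/2 \<Longrightarrow> fpiece 1 0 0 z = (5/16)*exp(-(5/16)/(z-1/2)+1) + 1/4"
proof (cases "z < 13/16")
  case False assume "z \<in> {1/2..13/16}" then have zv: "z = 13/16" using False by simp
  show ?thesis unfolding zv by (simp add: gval power2_eq_square)
qed (auto simp: gval)

lemma gP5: "z \<in> {13/16..15/16} \<Longrightarrow> fpiece 1 0 0 z = -8*(z-7/8)^2 + 19/32"
proof (cases "z < 15/16")
  case False assume "z \<in> {13/16..15/16}" then have zv: "z = 15/16" using False by simp
  show ?thesis unfolding zv by (simp add: gval power2_eq_square)
qed (auto simp: gval)

lemma gP6: "z \<in> {15/16..1} \<Longrightarrow> fpiece 1 0 0 z = -z + 3/2"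
  by (auto simp: gval)

lemma DP1: "z \<in> {0..1/16} \<Longrightarrow> Dg z = -1"
proof (cases "z < 1/16")
  case False assume "z \<in> {0..1/16}" then have zv: "z = 1/16" using False by simp
  show ?thesis unfolding zv by (simp add: Dg_def)
qed (auto simp: Dg_def)

lemma DP2: "z \<in> {1/16..3/16} \<Longrightarrow> Dg z = 16*z - 2"
proof (cases "z < 3/16")
  case False assume "z \<in> {1/16..3/16}" then have zv: "z = 3/16" using False by simp
  show ?thesis unfolding zv by (simp add: Dg_def)
qed (auto simp: Dg_def)

lemma DP3: "z \<in> {3/16..1/2} \<Longrightarrow> z < 1/2 \<Longrightarrow> Dg z = d3 z"
  by (auto simp: Dg_def d3_def)

lemma DP4: "z \<in> {1/2..13/16} \<Longrightarrow> z > 1/2 \<Longrightarrow> Dg z = d4 z"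
proof (cases "z < 13/16")
  case False assume "z \<in> {1/2..13/16}" then have zv: "z = 13/16" using False by simp
  show ?thesis unfolding zv by (simp add: Dg_def d4_def)
qed (auto simp: Dg_def d4_def)

lemma DP5: "z \<in> {13/16..15/16} \<Longrightarrow> Dg z = 14 - 16*z"
proof (cases "z < 15/16")
  case False assume "z \<in> {13/16..15/16}" then have zv: "z = 15/16" using False by simp
  show ?thesis unfolding zv by (simp add: Dg_def)
qed (auto simp: Dg_def)

lemma DP6: "z \<in> {15/16..1} \<Longrightarrow> Dg z = -1"
  by (auto simp: Dg_def)

lemma g3_deriv: "y < 1/2 \<Longrightarrow> ((\<lambda>y. -(5/16)*exp((5/16)/(y-1/2)+1) + 1/4) has_real_derivative d3 y) (at y)"
  unfolding d3_def
  apply (rule derivative_eq_intros refl | simp)+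
  apply (simp add: power2_eq_square)
  done

lemma g4_deriv: "y > 1/2 \<Longrightarrow> ((\<lambda>y. (5/16)*exp(-(5/16)/(y-1/2)+1) + 1/4) has_real_derivative d4 y) (at y)"
  unfolding d4_def
  apply (rule derivative_eq_intros refl | simp)+
  apply (simp add: power2_eq_square)
  done

lemma d3_deriv: "y < 1/2 \<Longrightarrow> (d3 has_real_derivative dd3 y) (at y)"
proof -
  assume "y < 1/2"
  define u where "u = y - 1/2"
  have u: "u \<noteq> 0" "y = u + 1/2" using \<open>y < 1/2\<close> by (auto simp: u_def)
  show ?thesis
    unfolding d3_def[abs_def] dd3_def
    apply (rule derivative_eq_intros refl | simp add: u)+
    apply (simp add: u field_simps eval_nat_numeral)
    done
qed

lemma d4_deriv: "y > 1/2 \<Longrightarrow> (d4 has_real_derivative dd4 y) (at y)"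
proof -
  assume "y > 1/2"
  define u where "u = y - 1/2"
  have u: "u \<noteq> 0" "y = u + 1/2" using \<open>y > 1/2\<close> by (auto simp: u_def)
  show ?thesis
    unfolding d4_def[abs_def] dd4_def
    apply (rule derivative_eq_intros refl | simp add: u)+
    apply (simp add: u field_simps eval_nat_numeral)
    done
qed


lemma g_deriv: "(fpiece 1 0 0 has_real_derivative Dg x) (at x within {0..1})"
proof (rule deriv_pieces)
  fix y :: real assume y: "y \<in> {0..1/16}"
  have "((\<lambda>y. -y) has_real_derivative Dg y) (at y)" using DP1[OF y] by (auto intro!: derivative_eq_intros)
  then show "(fpiece 1 0 0 has_real_derivative Dg y) (at y within {0..1/16})"
    by (rule piece_deriv[rotated 2]) (use y gP1 in auto)
next
  fix y :: real assume y: "y \<in> {1/16..3/16}"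
  have "((\<lambda>y. 8*(y-1/8)^2 - 3/32) has_real_derivative Dg y) (at y)" using DP2[OF y]
    by (auto intro!: derivative_eq_intros simp: algebra_simps)
  then show "(fpiece 1 0 0 has_real_derivative Dg y) (at y within {1/16..3/16})"
    by (rule piece_deriv[rotated 2]) (use y gP2 in auto)
next
  fix y :: real assume y: "y \<in> {3/16..1/2}"
  show "(fpiece 1 0 0 has_real_derivative Dg y) (at y within {3/16..1/2})"
  proof (cases "y < 1/2")
    case True
    have "((\<lambda>y. -(5/16)*exp((5/16)/(y-1/2)+1) + 1/4) has_real_derivative Dg y) (at y)"
      using g3_deriv[OF True] DP3[OF y True] by simp
    then show ?thesis by (rule piece_deriv_lt[where c="1/2", rotated 3]) (use y True gP3 in auto)
  next
    case False
    then have y2: "y = 1/2" using y by auto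
    have lim: "((\<lambda>y::real. ((- (5/16) * exp ((5/16) / (y - 1/2) + 1) + 1/4) - 1/4) / (y - 1/2)) \<longlongrightarrow> 0) (at_left (1/2))"
      by real_asymp
    have ev: "eventually (\<lambda>x. ((- (5/16) * exp ((5/16) / (x - 1/2) + 1) + 1/4) - 1/4) / (x - 1/2)
         = (fpiece 1 0 0 x - fpiece 1 0 0 (1/2)) / (x - 1/2)) (at_left (1/2::real))"
      using eventually_at_left_real[of "3/16" "1/2"] by (rule eventually_mono) (auto simp: gval)
    have "((\<lambda>x. (fpiece 1 0 0 x - fpiece 1 0 0 (1/2)) / (x - 1/2)) \<longlongrightarrow> 0) (at_left (1/2::real))"
      using tendsto_cong[OF ev] lim by simp
    then show ?thesis unfolding y2 has_field_derivative_iff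
      by (simp add: at_within_Icc_at_left Dg_def)
  qed
next
  fix y :: real assume y: "y \<in> {1/2..13/16}"
  show "(fpiece 1 0 0 has_real_derivative Dg y) (at y within {1/2..13/16})"
  proof (cases "y > 1/2")
    case True
    have "((\<lambda>y. (5/16)*exp(-(5/16)/(y-1/2)+1) + 1/4) has_real_derivative Dg y) (at y)"
      using g4_deriv[OF True] DP4[OF y True] by simp
    then show ?thesis by (rule piece_deriv_gt[where c="1/2", rotated 3]) (use y True gP4 in auto)
  next
    case False
    then have y2: "y = 1/2" using y by auto
    have lim: "((\<lambda>y::real. (((5/16) * exp (-(5/16) / (y - 1/2) + 1) + 1/4) - 1/4) / (y - 1/2)) \<longlongrightarrow> 0) (at_right (1/2))"
      by real_asymp
    have ev: "eventually (\<lambda>x. (((5/16) * exp (-(5/16) / (x - 1/2) + 1) + 1/4) - 1/4) / (x - 1/2)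
         = (fpiece 1 0 0 x - fpiece 1 0 0 (1/2)) / (x - 1/2)) (at_right (1/2::real))"
      using eventually_at_right_real[of "1/2" "13/16"] by (rule eventually_mono) (auto simp: gval)
    have "((\<lambda>x. (fpiece 1 0 0 x - fpiece 1 0 0 (1/2)) / (x - 1/2)) \<longlongrightarrow> 0) (at_right (1/2::real))"
      using tendsto_cong[OF ev] lim by simp
    then show ?thesis unfolding y2 has_field_derivative_iff
      by (simp add: at_within_Icc_at_right Dg_def)
  qed
next
  fix y :: real assume y: "y \<in> {13/16..15/16}"
  have "((\<lambda>y. -8*(y-7/8)^2 + 19/32) has_real_derivative Dg y) (at y)" using DP5[OF y]
    by (auto intro!: derivative_eq_intros simp: algebra_simps)
  then show "(fpiece 1 0 0 has_real_derivative Dg y) (at y within {13/16..15/16})"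
    by (rule piece_deriv[rotated 2]) (use y gP5 in auto)
next
  fix y :: real assume y: "y \<in> {15/16..1}"
  have "((\<lambda>y. -y + 3/2) has_real_derivative Dg y) (at y)" using DP6[OF y] by (auto intro!: derivative_eq_intros)
  then show "(fpiece 1 0 0 has_real_derivative Dg y) (at y within {15/16..1})"
    by (rule piece_deriv[rotated 2]) (use y gP6 in auto)
qed

lemma g_lower: "x \<in> {0..1} \<Longrightarrow> fpiece 1 0 0 x \<ge> -3/32"
proof -
  assume x: "x \<in> {0..1}"
  consider "x \<in> {0..1/16}" | "x \<in> {1/16..3/16}" | "x \<in> {3/16..1/2}" "x < 1/2" | "x = 1/2"
    | "x \<in> {1/2..13/16}" "x > 1/2" | "x \<in> {13/16..15/16}" | "x \<in> {15/16..1}"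
    using x by fastforce
  then show ?thesis
  proof cases
    case 1 then show ?thesis using gP1 by auto
  next
    case 2
    have "(x-1/8)^2 \<ge> 0" by simp
    then show ?thesis using gP2[OF 2] by linarith
  next
    case 3
    have "(5/16)/(x-1/2) \<le> -1" using 3 by (auto simp: field_simps)
    then have e: "exp((5/16)/(x-1/2)+1) \<le> 1" by simp
    show ?thesis using gP3[OF 3] e by linarith
  next
    case 4 then show ?thesis by (simp add: gval)
  next
    case 5
    have "exp(-(5/16)/(x-1/2)+1) > 0" by simp
    then show ?thesis using gP4[OF 5] by linarith
  next
    case 6
    have b: "-1/16 \<le> x - 7/8" "x - 7/8 \<le> 1/16" using 6 by auto
    have "\<bar>x - 7/8\<bar> \<le> 1/16" using abs_le_iff[of "x-7/8" "1/16"] b by linarith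
    then have "(x-7/8)^2 \<le> (1/16)^2" by (intro power2_le_iff_abs_le[THEN iffD2]) auto
    moreover have "(1/16::real)^2 = 1/256" by (simp add: power2_eq_square)
    ultimately show ?thesis using gP5[OF 6] by linarith
  next
    case 7 then show ?thesis using gP6 by auto
  qed
qed


lemma Dg_P3_deriv: "y \<in> {3/16..1/2} \<Longrightarrow>
  (Dg has_real_derivative (if y < 1/2 then dd3 y else 0)) (at y within {3/16..1/2})"
proof (cases "y < 1/2")
  case True
  assume y: "y \<in> {3/16..1/2}"
  have "(d3 has_real_derivative (if y < 1/2 then dd3 y else 0)) (at y)" using d3_deriv[OF True] True by simp
  then show ?thesis by (rule piece_deriv_lt[where c="1/2", rotated 3]) (use y True DP3 in auto)
next
  case False
  assume y: "y \<in> {3/16..1/2}"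
  then have y2: "y = 1/2" using False by auto
  have lim: "((\<lambda>y::real. ((5/16)^2/(y-1/2)^2 * exp ((5/16) / (y - 1/2) + 1) - 0) / (y - 1/2)) \<longlongrightarrow> 0) (at_left (1/2))"
    by real_asymp
  have ev: "eventually (\<lambda>x. ((5/16)^2/(x-1/2)^2 * exp ((5/16) / (x - 1/2) + 1) - 0) / (x - 1/2)
       = (Dg x - Dg (1/2)) / (x - 1/2)) (at_left (1/2::real))"
    using eventually_at_left_real[of "3/16" "1/2"] by (rule eventually_mono) (auto simp: Dg_def)
  have "((\<lambda>x. (Dg x - Dg (1/2)) / (x - 1/2)) \<longlongrightarrow> 0) (at_left (1/2::real))"
    using tendsto_cong[OF ev] lim by simp
  then show ?thesis unfolding y2 has_field_derivative_iff
    by (simp add: at_within_Icc_at_left)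
qed

lemma Dg_P4_deriv: "y \<in> {1/2..13/16} \<Longrightarrow>
  (Dg has_real_derivative (if y > 1/2 then dd4 y else 0)) (at y within {1/2..13/16})"
proof (cases "y > 1/2")
  case True
  assume y: "y \<in> {1/2..13/16}"
  have "(d4 has_real_derivative (if y > 1/2 then dd4 y else 0)) (at y)" using d4_deriv[OF True] True by simp
  then show ?thesis by (rule piece_deriv_gt[where c="1/2", rotated 3]) (use y True DP4 in auto)
next
  case False
  assume y: "y \<in> {1/2..13/16}"
  then have y2: "y = 1/2" using False by auto
  have lim: "((\<lambda>y::real. ((5/16)^2/(y-1/2)^2 * exp (-(5/16) / (y - 1/2) + 1) - 0) / (y - 1/2)) \<longlongrightarrow> 0) (at_right (1/2))"
    by real_asymp
  have ev: "eventually (\<lambda>x. ((5/16)^2/(x-1/2)^2 * exp (-(5/16) / (x - 1/2) + 1) - 0) / (x - 1/2)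
       = (Dg x - Dg (1/2)) / (x - 1/2)) (at_right (1/2::real))"
    using eventually_at_right_real[of "1/2" "13/16"] by (rule eventually_mono) (auto simp: Dg_def)
  have "((\<lambda>x. (Dg x - Dg (1/2)) / (x - 1/2)) \<longlongrightarrow> 0) (at_right (1/2::real))"
    using tendsto_cong[OF ev] lim by simp
  then show ?thesis unfolding y2 has_field_derivative_iff
    by (simp add: at_within_Icc_at_right)
qed

lemma dd3_cont: "continuous_on {3/16..1/2} (\<lambda>y. if y < 1/2 then dd3 y else 0)"
proof (rule continuous_on_eq_continuous_within[THEN iffD2], intro ballI)
  fix x :: real assume x: "x \<in> {3/16..1/2}"
  show "continuous (at x within {3/16..1/2}) (\<lambda>y. if y < 1/2 then dd3 y else 0)"
  proof (cases "x < 1/2")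
    case True
    have "isCont dd3 x"
      unfolding dd3_def using True by (intro continuous_intros) auto
    then have "continuous (at x within {3/16..1/2}) dd3"
      by (rule continuous_at_imp_continuous_at_within)
    then show ?thesis
      by (rule continuous_transform_within[where \<delta>="1/2 - x"]) (use x True in \<open>auto simp: dist_real_def\<close>)
  next
    case False
    then have x2: "x = 1/2" using x by auto
    have lim: "((\<lambda>y::real. exp ((5/16) / (y - 1/2) + 1) * (-2*(5/16)^2/(y-1/2)^3 - (5/16)^3/(y-1/2)^4)) \<longlongrightarrow> 0) (at_left (1/2))"
      by real_asymp
    have ev: "eventually (\<lambda>y. exp ((5/16) / (y - 1/2) + 1) * (-2*(5/16)^2/(y-1/2)^3 - (5/16)^3/(y-1/2)^4)
       = (if y < 1/2 then dd3 y else 0)) (at_left (1/2::real))"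
      using eventually_at_left_real[of "3/16" "1/2"] by (rule eventually_mono) (auto simp: dd3_def)
    show ?thesis unfolding x2 continuous_within at_within_Icc_at_left[of "3/16" "1/2::real", simplified]
      using tendsto_cong[OF ev] lim by simp
  qed
qed

lemma dd4_cont: "continuous_on {1/2..13/16} (\<lambda>y. if y > 1/2 then dd4 y else 0)"
proof (rule continuous_on_eq_continuous_within[THEN iffD2], intro ballI)
  fix x :: real assume x: "x \<in> {1/2..13/16}"
  show "continuous (at x within {1/2..13/16}) (\<lambda>y. if y > 1/2 then dd4 y else 0)"
  proof (cases "x > 1/2")
    case True
    have "isCont dd4 x"
      unfolding dd4_def using True by (intro continuous_intros) auto
    then have "continuous (at x within {1/2..13/16}) dd4"
      by (rule continuous_at_imp_continuous_at_within)
    then show ?thesis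
      by (rule continuous_transform_within[where \<delta>="x - 1/2"]) (use x True in \<open>auto simp: dist_real_def\<close>)
  next
    case False
    then have x2: "x = 1/2" using x by auto
    have lim: "((\<lambda>y::real. exp (-(5/16) / (y - 1/2) + 1) * (-2*(5/16)^2/(y-1/2)^3 + (5/16)^3/(y-1/2)^4)) \<longlongrightarrow> 0) (at_right (1/2))"
      by real_asymp
    have ev: "eventually (\<lambda>y. exp (-(5/16) / (y - 1/2) + 1) * (-2*(5/16)^2/(y-1/2)^3 + (5/16)^3/(y-1/2)^4)
       = (if y > 1/2 then dd4 y else 0)) (at_right (1/2::real))"
      using eventually_at_right_real[of "1/2" "13/16"] by (rule eventually_mono) (auto simp: dd4_def)
    show ?thesis unfolding x2 continuous_within at_within_Icc_at_right[of "1/2::real" "13/16", simplified]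
      using tendsto_cong[OF ev] lim by simp
  qed
qed

lemma Dg_lip: "\<exists>L. L-lipschitz_on {0..1} Dg"
proof -
  obtain B3 where B3: "B3 \<ge> 0" "\<And>x. x \<in> {3/16..1/2} \<Longrightarrow> \<bar>(if x < 1/2 then dd3 x else 0)\<bar> \<le> B3"
    using bnd_cont[OF dd3_cont] by blast
  obtain B4 where B4: "B4 \<ge> 0" "\<And>x. x \<in> {1/2..13/16} \<Longrightarrow> \<bar>(if x > 1/2 then dd4 x else 0)\<bar> \<le> B4"
    using bnd_cont[OF dd4_cont] by blast
  define L where "L = 16 + B3 + B4"
  have l1: "L-lipschitz_on {0..1/16} Dg"
  proof (rule lip_piece[where f'="\<lambda>_. 0"])
    fix x :: real assume x: "x \<in> {0..1/16}"
    show "(Dg has_real_derivative 0) (at x within {0..1/16})"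
      by (rule piece_deriv[where h="\<lambda>_. -1"]) (use x DP1 in auto)
  qed (use B3 B4 in \<open>auto simp: L_def\<close>)
  have l2: "L-lipschitz_on {1/16..3/16} Dg"
  proof (rule lip_piece[where f'="\<lambda>_. 16"])
    fix x :: real assume x: "x \<in> {1/16..3/16}"
    show "(Dg has_real_derivative 16) (at x within {1/16..3/16})"
      by (rule piece_deriv[where h="\<lambda>y. 16*y - 2"]) (use x DP2 in \<open>auto intro!: derivative_eq_intros\<close>)
  qed (use B3 B4 in \<open>auto simp: L_def\<close>)
  have l3: "L-lipschitz_on {3/16..1/2} Dg"
  proof (rule lip_piece[OF _ Dg_P3_deriv])
    fix x :: real assume x: "x \<in> {3/16..1/2}"
    show "\<bar>(if x < 1/2 then dd3 x else 0)\<bar> \<le> L" using B3(2)[OF x] B4(1) unfolding L_def by linarith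
  qed auto
  have l4: "L-lipschitz_on {1/2..13/16} Dg"
  proof (rule lip_piece[OF _ Dg_P4_deriv])
    fix x :: real assume x: "x \<in> {1/2..13/16}"
    show "\<bar>(if x > 1/2 then dd4 x else 0)\<bar> \<le> L" using B4(2)[OF x] B3(1) unfolding L_def by linarith
  qed auto
  have l5: "L-lipschitz_on {13/16..15/16} Dg"
  proof (rule lip_piece[where f'="\<lambda>_. -16"])
    fix x :: real assume x: "x \<in> {13/16..15/16}"
    show "(Dg has_real_derivative -16) (at x within {13/16..15/16})"
      by (rule piece_deriv[where h="\<lambda>y. 14 - 16*y"]) (use x DP5 in \<open>auto intro!: derivative_eq_intros\<close>)
  qed (use B3 B4 in \<open>auto simp: L_def\<close>)
  have l6: "L-lipschitz_on {15/16..1} Dg"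
  proof (rule lip_piece[where f'="\<lambda>_. 0"])
    fix x :: real assume x: "x \<in> {15/16..1}"
    show "(Dg has_real_derivative 0) (at x within {15/16..1})"
      by (rule piece_deriv[where h="\<lambda>_. -1"]) (use x DP6 in auto)
  qed (use B3 B4 in \<open>auto simp: L_def\<close>)
  have "L-lipschitz_on {0..1} Dg"
    using lip_cat[OF lip_cat[OF lip_cat[OF lip_cat[OF lip_cat[OF l1 l2] l3] l4] l5] l6] .
  then show ?thesis by blast
qed


lemma Sseq_Suc: "Sseq m (Suc j) = Sseq m j + m j"
  by (simp add: Sseq_def)

lemma fpiece_scale:
  fixes M s c x :: real
  assumes M: "M > 0"
  shows "fpiece M s c x = c + M * fpiece 1 0 0 ((x - s)/M)"
proof -
  have c1: "((x-s)/M < 1/16) = (x < s + M/16)" "((x-s)/M < 3/16) = (x < s + 3*M/16)"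
    "((x-s)/M < 1/2) = (x < s + M/2)" "((x-s)/M = 1/2) = (x = s + M/2)"
    "((x-s)/M < 13/16) = (x < s + 13*M/16)" "((x-s)/M < 15/16) = (x < s + 15*M/16)"
    using M by (auto simp: field_simps)
  have e1: "(5/16)/((x-s)/M - 1/2) = (5*M/16)/(x-s-M/2)"
    using M by (cases "x-s-M/2=0") (auto simp: field_simps)
  have e2: "-(5/16)/((x-s)/M - 1/2) = (-(5*M/16))/(x-s-M/2)"
    using M by (cases "x-s-M/2=0") (auto simp: field_simps)
  show ?thesis
    unfolding gval fpiece_def c1 e1 e2
    using M by (auto simp: field_simps power2_eq_square)
qed

lemma scale_image:
  fixes M s :: real
  assumes M: "M > 0"
  shows "(\<lambda>x. (x - s)/M) ` {s..s+M} = {0..1}"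
proof
  show "(\<lambda>x. (x - s)/M) ` {s..s+M} \<subseteq> {0..1}" using M by (auto simp: field_simps)
  show "{0..1} \<subseteq> (\<lambda>x. (x - s)/M) ` {s..s+M}"
  proof
    fix t :: real assume t: "t \<in> {0..1}"
    have "(s + M*t - s)/M = t" using M by simp
    moreover have "s + M*t \<in> {s..s+M}" using M t by (auto simp: mult_le_cancel_left1)
    ultimately show "t \<in> (\<lambda>x. (x - s)/M) ` {s..s+M}" by (metis image_eqI)
  qed
qed

theorem proposition5p2:
  fixes m :: "nat \<Rightarrow> real"
  assumes pos: "\<And>k. m k > 0"
    and div: "filterlim (\<lambda>n. \<Sum>k<n. m k) at_top sequentially"
    and lim0: "m \<longlonglongrightarrow> 0"
  shows "\<forall>j. continuous_on {Sseq m j .. Sseq m (Suc j)} (fext m j)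
          \<and> (\<forall>x \<in> {Sseq m j .. Sseq m (Suc j)}. fext m j x \<ge> cseq m j - 3 * m j / 32)
          \<and> (\<exists>D. (\<forall>x \<in> {Sseq m j .. Sseq m (Suc j)}.
                    (fext m j has_real_derivative D x) (at x within {Sseq m j .. Sseq m (Suc j)}))
               \<and> D (Sseq m j) = -1 \<and> D (Sseq m (Suc j)) = -1
               \<and> (\<forall>x \<in> {Sseq m j .. Sseq m (Suc j)}. \<exists>e>0. \<exists>L.
                    L-lipschitz_on ({Sseq m j .. Sseq m (Suc j)} \<inter> cball x e) D))"
proof
  fix j
  define M where "M = m j"
  define s where "s = Sseq m j"
  define c where "c = cseq m j"
  have M: "M > 0" using pos by (simp add: M_def)
  have S1: "Sseq m (Suc j) = s + M" by (simp add: Sseq_Suc s_def M_def)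
  define \<phi> where "\<phi> = (\<lambda>x. (x - s)/M)"
  define F where "F = (\<lambda>x. c + M * fpiece 1 0 0 (\<phi> x))"
  have fj: "fj m j = fpiece M s c" by (simp add: fj_def[abs_def] M_def s_def c_def)
  have lim: "((fpiece M s c) \<longlongrightarrow> c) (at_right s)"
  proof -
    have "((\<lambda>y. -y + s + c) \<longlongrightarrow> -s + s + c) (at_right s)" by (intro tendsto_intros)
    then have l: "((\<lambda>y. -y + s + c) \<longlongrightarrow> c) (at_right s)" by simp
    have "eventually (\<lambda>y. -y + s + c = fpiece M s c y) (at_right s)"
      using eventually_at_right_real[of s "s + M/16"] M
      by (auto elim!: eventually_mono simp: fpiece_def)
    from tendsto_cong[OF this] l show ?thesis by simp
  qed
  have fext: "fext m j = F"
  proof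
    fix x
    show "fext m j x = F x"
    proof (cases "x = s")
      case True
      have "Lim (at_right s) (fpiece M s c) = c" by (rule tendsto_Lim[OF _ lim]) simp
      then show ?thesis using True
        by (simp add: fext_def fj F_def \<phi>_def gval flip: s_def)
    next
      case False
      then show ?thesis
        by (simp add: fext_def fj F_def \<phi>_def fpiece_scale[OF M] flip: s_def)
    qed
  qed
  have img: "\<phi> ` {s..s+M} = {0..1}" unfolding \<phi>_def by (rule scale_image[OF M])
  define D where "D = (\<lambda>x. Dg (\<phi> x))"
  have deriv: "(F has_real_derivative D x) (at x within {s..s+M})" if x: "x \<in> {s..s+M}" for x
  proof -
    have g: "(fpiece 1 0 0 has_real_derivative Dg (\<phi> x)) (at (\<phi> x) within \<phi> ` {s..s+M})"
      unfolding img by (rule g_deriv)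
    have p: "(\<phi> has_real_derivative 1/M) (at x within {s..s+M})"
      unfolding \<phi>_def using M by (auto intro!: derivative_eq_intros)
    have "((fpiece 1 0 0 \<circ> \<phi>) has_real_derivative Dg (\<phi> x) * (1/M)) (at x within {s..s+M})"
      by (rule DERIV_image_chain[OF g p])
    from DERIV_cmult[OF this, of M]
    have "((\<lambda>x. M * (fpiece 1 0 0 \<circ> \<phi>) x) has_real_derivative M * (Dg (\<phi> x) * (1/M))) (at x within {s..s+M})" .
    from DERIV_add[OF DERIV_const this]
    have "((\<lambda>x. c + M * (fpiece 1 0 0 \<circ> \<phi>) x) has_real_derivative 0 + M * (Dg (\<phi> x) * (1/M))) (at x within {s..s+M})" .
    then show ?thesis using M by (simp add: F_def D_def o_def)
  qed
  show "continuous_on {Sseq m j .. Sseq m (Suc j)} (fext m j)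
          \<and> (\<forall>x \<in> {Sseq m j .. Sseq m (Suc j)}. fext m j x \<ge> cseq m j - 3 * m j / 32)
          \<and> (\<exists>D. (\<forall>x \<in> {Sseq m j .. Sseq m (Suc j)}.
                    (fext m j has_real_derivative D x) (at x within {Sseq m j .. Sseq m (Suc j)}))
               \<and> D (Sseq m j) = -1 \<and> D (Sseq m (Suc j)) = -1
               \<and> (\<forall>x \<in> {Sseq m j .. Sseq m (Suc j)}. \<exists>e>0. \<exists>L.
                    L-lipschitz_on ({Sseq m j .. Sseq m (Suc j)} \<inter> cball x e) D))"
    unfolding fext S1 s_def[symmetric] c_def[symmetric] M_def[symmetric]
  proof (intro conjI ballI exI[of _ D])
    show "continuous_on {s..s+M} F"
      unfolding continuous_on_eq_continuous_within using deriv DERIV_continuous by blast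
    show "c - 3 * M / 32 \<le> F x" if x: "x \<in> {s..s+M}" for x
    proof -
      have "\<phi> x \<in> {0..1}" using img x by blast
      then have "fpiece 1 0 0 (\<phi> x) \<ge> -3/32" by (rule g_lower)
      then have "M * fpiece 1 0 0 (\<phi> x) \<ge> M * (-3/32)" using M by (intro mult_left_mono) auto
      then show ?thesis by (simp add: F_def)
    qed
    show "(F has_real_derivative D x) (at x within {s..s+M})" if "x \<in> {s..s+M}" for x
      using deriv that .
    show "D s = -1" by (simp add: D_def \<phi>_def Dg_def)
    show "D (s + M) = -1" using M by (simp add: D_def \<phi>_def Dg_def)
    fix x assume "x \<in> {s..s+M}"
    obtain L where L: "L-lipschitz_on {0..1} Dg" using Dg_lip by blast
    have "(L/M)-lipschitz_on ({s..s+M} \<inter> cball x 1) D"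
    proof (rule lipschitz_onI)
      show "0 \<le> L/M" using lipschitz_on_nonneg[OF L] M by simp
      fix y z assume y: "y \<in> {s..s+M} \<inter> cball x 1" and z: "z \<in> {s..s+M} \<inter> cball x 1"
      have "\<phi> y \<in> {0..1}" "\<phi> z \<in> {0..1}" using img y z by blast+
      then have "dist (Dg (\<phi> y)) (Dg (\<phi> z)) \<le> L * dist (\<phi> y) (\<phi> z)"
        using lipschitz_onD[OF L] by blast
      also have "dist (\<phi> y) (\<phi> z) = dist y z / M"
        using M by (simp add: \<phi>_def dist_real_def diff_divide_distrib[symmetric] abs_divide)
      finally show "dist (D y) (D z) \<le> L / M * dist y z" by (simp add: D_def)
    qed
    then show "\<exists>e>0. \<exists>L. L-lipschitz_on ({s..s+M} \<inter> cball x e) D" by (intro exI[of _ 1]) auto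
  qed
qed

end
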